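(* Let $\varepsilon$ be a centered Gaussian process on $\mathbb{R}^d$ with unit variance and correlation function $\rho$, let $Y(x)=(2\pi)^{1/2}\varepsilon(x)$, and for a tuple $y=(y_1,\ldots,y_n)\in(\mathbb{R}^d)^n$ with positive definite covariance matrix $\Sigma_y$ of $\varepsilon(y)$, let $\lambda_y$ be the density of $\Lambda_y(A)=\int_0^\infty\Pr\{\zeta Y(y)\in A\}\zeta^{-2}d\zeta$, $A\subset\mathbb{R}^n$ Borel, namely $\lambda_y(w)=\pi^{-(n-1)/2}|\Sigma_y|^{-1/2}(w^T\Sigma_y^{-1}w)^{-(n+1)/2}\Gamma((n+1)/2)$. Let $m,k\ge1$, $s\in(\mathbb{R}^d)^m$, $x\in(\mathbb{R}^d)^k$ such that the covariance matrix $$\Sigma_{(s,x)}=\begin{bmatrix}\Sigma_s&\Sigma_{s:x}\\ \Sigma_{x:s}&\Sigma_x\end{bmatrix}$$ of $(\varepsilon(s),\varepsilon(x))$ is positive definite. Then for all $u\in\mathbb{R}^m$ and $z\in\mathbb{R}^k\setminus\{0\}$, the conditional intensity function $\lambda_{s\mid x,z}(u)=\lambda_{(s,x)}(u,z)/\lambda_x(z)$ is the density of a multivariate Student distribution with $k+1$ degrees of freedom, location $\mu=\Sigma_{s:x}\Sigma_x^{-1}z$ and scale matrix $\tilde\Sigma=\frac{a_x(z)}{k+1}(\Sigma_s-\Sigma_{s:x}\Sigma_x^{-1}\Sigma_{x:s})$, where $a_x(z)=z^T\Sigma_x^{-1}z$; that is, $$\lambda_{s\mid x,z}(u)=\pi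^{-m/2}(k+1)^{-m/2}|\tilde\Sigma|^{-1/2}\left\{1+\frac{(u-\mu)^T\tilde\Sigma^{-1}(u-\mu)}{k+1}\right\}^{-(m+k+1)/2}\frac{\Gamma\left(\frac{m+k+1}{2}\right)}{\Gamma\left(\frac{k+1}{2}\right)}.$$
   Context: This is the Schlather max-stable model, represented with $Y=(2\pi)^{1/2}\varepsilon$ and $\{\zeta_i\}$ a Poisson process on $(0,\infty)$ with intensity $\zeta^{-2}d\zeta$. For tuples, $\varepsilon(y)$ denotes the vector of values at the points of $y$; $(s,x)$ denotes the concatenated tuple and $(u,z)$ the concatenated vector; $\Sigma_{s:x}$ is the cross-covariance matrix between $\varepsilon(s)$ and $\varepsilon(x)$ and $\Sigma_{x:s}=\Sigma_{s:x}^T$. *)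

theory Defs
  imports "HOL-Analysis.Analysis"
begin

definition correlation_function :: "(real^'d \<Rightarrow> real^'d \<Rightarrow> real) \<Rightarrow> bool" where
  "correlation_function \<rho> \<longleftrightarrow>
     (\<forall>p q. \<rho> p q = \<rho> q p) \<and> (\<forall>p. \<rho> p p = 1) \<and>
     (\<forall>(ps :: (real^'d) list) (cs :: real list). length cs = length ps \<longrightarrow>
        0 \<le> (\<Sum>i<length ps. \<Sum>j<length ps. cs!i * cs!j * \<rho> (ps!i) (ps!j)))"

definition cov_mat :: "(real^'d \<Rightarrow> real^'d \<Rightarrow> real) \<Rightarrow> ('n::finite \<Rightarrow> real^'d) \<Rightarrow> real^'n^'n" where
  "cov_mat \<rho> y = (\<chi> i j. \<rho> (y i) (y j))"

definition cross_cov :: "(real^'d \<Rightarrow> real^'d \<Rightarrow> real) \<Rightarrow> ('m::finite \<Rightarrow> real^'d) \<Rightarrow> ('k::finite \<Rightarrow> real^'d) \<Rightarrow> real^'k^'m" where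
  "cross_cov \<rho> s x = (\<chi> i j. \<rho> (s i) (x j))"

definition pos_def :: "real^'n^'n \<Rightarrow> bool" where
  "pos_def A \<longleftrightarrow> transpose A = A \<and> (\<forall>v. v \<noteq> 0 \<longrightarrow> 0 < v \<bullet> (A *v v))"

definition concat_pts :: "('m \<Rightarrow> 'a) \<Rightarrow> ('k \<Rightarrow> 'a) \<Rightarrow> ('m + 'k \<Rightarrow> 'a)" where
  "concat_pts s x = case_sum s x"

definition concat_vec :: "real^'m::finite \<Rightarrow> real^'k::finite \<Rightarrow> real^('m + 'k)" where
  "concat_vec u z = (\<chi> i. case i of Inl a \<Rightarrow> u $ a | Inr b \<Rightarrow> z $ b)"

definition lambda_dens :: "(real^'d \<Rightarrow> real^'d \<Rightarrow> real) \<Rightarrow> ('n::finite \<Rightarrow> real^'d) \<Rightarrow> real^'n \<Rightarrow> real" where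
  "lambda_dens \<rho> y w =
     (let n = real CARD('n); S = cov_mat \<rho> y in
      pi powr (-(n - 1) / 2) * det S powr (-1/2)
      * (w \<bullet> (matrix_inv S *v w)) powr (-(n + 1) / 2) * Gamma ((n + 1) / 2))"

definition cond_intensity :: "(real^'d \<Rightarrow> real^'d \<Rightarrow> real) \<Rightarrow> ('m::finite \<Rightarrow> real^'d) \<Rightarrow> ('k::finite \<Rightarrow> real^'d)
     \<Rightarrow> real^'k \<Rightarrow> real^'m \<Rightarrow> real" where
  "cond_intensity \<rho> s x z u = lambda_dens \<rho> (concat_pts s x) (concat_vec u z) / lambda_dens \<rho> x z"

definition student_density :: "real \<Rightarrow> real^'m::finite \<Rightarrow> real^'m^'m \<Rightarrow> real^'m \<Rightarrow> real" where
  "student_density \<nu> \<mu> S u =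
     (let m = real CARD('m) in
      pi powr (-m/2) * \<nu> powr (-m/2) * det S powr (-1/2)
      * (1 + ((u - \<mu>) \<bullet> (matrix_inv S *v (u - \<mu>))) / \<nu>) powr (-(m + \<nu>) / 2)
      * Gamma ((m + \<nu>) / 2) / Gamma (\<nu> / 2))"

end

theory Submission imports Defs begin


definition blk :: "real^'m::finite^'m \<Rightarrow> real^'k::finite^'m \<Rightarrow> real^'m^'k \<Rightarrow> real^'k^'k \<Rightarrow> real^('m+'k)^('m+'k)" where
"blk P Q R T = (\<chi> i j. case i of Inl a \<Rightarrow> (case j of Inl b \<Rightarrow> P$a$b | Inr b \<Rightarrow> Q$a$b)
    | Inr a \<Rightarrow> (case j of Inl b \<Rightarrow> R$a$b | Inr b \<Rightarrow> T$a$b))"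

lemma blk_nth[simp]:
  "blk P Q R T $ Inl a $ Inl b = P$a$b" "blk P Q R T $ Inl a $ Inr c = Q$a$c"
  "blk P Q R T $ Inr c $ Inl b = R$c$b" "blk P Q R T $ Inr c $ Inr d = T$c$d"
  by (simp_all add: blk_def)

lemma concat_vec_nth[simp]: "concat_vec u z $ Inl a = u $ a" "concat_vec u z $ Inr b = z $ b"
  by (simp_all add: concat_vec_def)

lemma sum_UNIV_sum: "(\<Sum>i\<in>(UNIV::('a::finite+'b::finite) set). f i) = (\<Sum>a\<in>UNIV. f (Inl a)) + (\<Sum>b\<in>UNIV. f (Inr b))"
  by (subst UNIV_Plus_UNIV[symmetric], subst sum.Plus) (auto simp: o_def)

lemma prod_UNIV_sum: "(\<Prod>i\<in>(UNIV::('a::finite+'b::finite) set). f i) = (\<Prod>a\<in>UNIV. f (Inl a)) * (\<Prod>b\<in>UNIV. f (Inr b))"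
  by (subst UNIV_Plus_UNIV[symmetric], subst prod.Plus) (auto simp: o_def)

lemma blk_mult_vec: "blk P Q R T *v concat_vec v w = concat_vec (P *v v + Q *v w) (R *v v + T *v w)"
  unfolding vec_eq_iff
proof
  fix i :: "'a + 'b" show "(blk P Q R T *v concat_vec v w) $ i = concat_vec (P *v v + Q *v w) (R *v v + T *v w) $ i"
    by (cases i) (simp_all add: matrix_vector_mult_def sum_UNIV_sum)
qed

lemma inner_concat: "concat_vec a b \<bullet> concat_vec c d = a \<bullet> c + b \<bullet> d"
  by (simp add: inner_vec_def sum_UNIV_sum)

lemma concat_eq0: "concat_vec a b = 0 \<longleftrightarrow> a = 0 \<and> b = 0"
  by (auto simp: vec_eq_iff concat_vec_def split: sum.splits)

lemma blk_mult: "blk P Q R T ** blk P' Q' R' T' = blk (P ** P' + Q ** R') (P ** Q' + Q ** T') (R ** P' + T ** R') (R ** Q' + T ** T')"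
  unfolding vec_eq_iff
proof (intro allI)
  fix i j :: "'a + 'b" show "(blk P Q R T ** blk P' Q' R' T') $ i $ j = blk (P ** P' + Q ** R') (P ** Q' + Q ** T') (R ** P' + T ** R') (R ** Q' + T ** T') $ i $ j"
    by (cases i; cases j) (simp_all add: matrix_matrix_mult_def sum_UNIV_sum)
qed

lemma blk_transpose: "transpose (blk P Q R T) = blk (transpose P) (transpose R) (transpose Q) (transpose T)"
  unfolding vec_eq_iff
proof (intro allI)
  fix i j :: "'a + 'b" show "transpose (blk P Q R T) $ i $ j = blk (transpose P) (transpose R) (transpose Q) (transpose T) $ i $ j"
    by (cases i; cases j) (simp_all add: transpose_def)
qed



lemma swapidseq_map_sum_l: "swapidseq n p \<Longrightarrow> swapidseq n (map_sum p (id::'b\<Rightarrow>'b))"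
proof (induct n p rule: swapidseq.induct)
  case id then show ?case by (simp only: sum.map_id0 swapidseq.id)
next
  case (comp_Suc n p a b)
  have "map_sum (Transposition.transpose a b \<circ> p) (id::'b\<Rightarrow>'b) = Transposition.transpose (Inl a) (Inl b) \<circ> map_sum p id"
    by (rule ext, case_tac x) (auto simp: Transposition.transpose_def)
  note eq = this
  have "swapidseq (Suc n) (Transposition.transpose (Inl a) (Inl b) \<circ> map_sum p (id::'b\<Rightarrow>'b))"
    apply (rule swapidseq.comp_Suc)
    using comp_Suc(2) apply assumption
    using comp_Suc(3) apply simp done
  then show ?case by (simp only: eq)
qed

lemma swapidseq_map_sum_r: "swapidseq n q \<Longrightarrow> swapidseq n (map_sum (id::'a\<Rightarrow>'a) q)"
proof (induct n q rule: swapidseq.induct)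
  case id then show ?case by (simp only: sum.map_id0 swapidseq.id)
next
  case (comp_Suc n p a b)
  have "map_sum (id::'a\<Rightarrow>'a) (Transposition.transpose a b \<circ> p) = Transposition.transpose (Inr a) (Inr b) \<circ> map_sum id p"
    by (rule ext, case_tac x) (auto simp: Transposition.transpose_def)
  note eq = this
  have "swapidseq (Suc n) (Transposition.transpose (Inr a) (Inr b) \<circ> map_sum (id::'a\<Rightarrow>'a) p)"
    apply (rule swapidseq.comp_Suc)
    using comp_Suc(2) apply assumption
    using comp_Suc(3) apply simp done
  then show ?case by (simp only: eq)
qed

lemma sign_map_sum:
  fixes p :: "'a::finite \<Rightarrow> 'a" and q :: "'b::finite \<Rightarrow> 'b"
  assumes "p permutes UNIV" "q permutes UNIV"
  shows "sign (map_sum p q) = sign p * sign q"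
proof -
  have pp: "permutation p" "permutation q"
    by (rule permutes_imp_permutation[OF _ assms(1)], simp) (rule permutes_imp_permutation[OF _ assms(2)], simp)
  then obtain n m where n: "swapidseq n p" and m: "swapidseq m q" unfolding permutation_def by blast
  have e: "map_sum p q = map_sum p (id::'b\<Rightarrow>'b) \<circ> map_sum (id::'a\<Rightarrow>'a) q" by (rule ext, case_tac x) simp_all
  have s: "swapidseq (n+m) (map_sum p q)" unfolding e
    by (rule swapidseq_comp_add[OF swapidseq_map_sum_l[OF n] swapidseq_map_sum_r[OF m]])
  have "evenperm (map_sum p q) = even (n+m)" by (rule evenperm_unique[OF s]) simp
  moreover have "evenperm p = even n" by (rule evenperm_unique[OF n]) simp
  moreover have "evenperm q = even m" by (rule evenperm_unique[OF m]) simp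
  ultimately show ?thesis unfolding sign_def by auto
qed

lemma map_sum_permutes:
  assumes "p permutes UNIV" "q permutes UNIV"
  shows "map_sum p q permutes UNIV"
proof -
  have bp: "bij p" "bij q" using assms permutes_bij by blast+
  have "map_sum p q \<circ> map_sum (inv p) (inv q) = id" "map_sum (inv p) (inv q) \<circ> map_sum p q = id"
    by (rule ext, case_tac x, simp_all add: bp bij_is_surj surj_f_inv_f bij_is_inj inv_f_f)+
  then have "bij (map_sum p q)" by (rule o_bij[rotated])
  then show ?thesis by (rule bij_imp_permutes) simp_all
qed

lemma permutes_split:
  fixes p :: "'a::finite + 'b::finite \<Rightarrow> 'a + 'b"
  assumes p: "p permutes UNIV" and l: "\<And>a. p (Inl a) \<in> range Inl"
  shows "\<exists>p1 p2. p1 permutes UNIV \<and> p2 permutes UNIV \<and> p = map_sum p1 p2"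
proof -
  define p1 where "p1 a = projl (p (Inl a))" for a
  have pl: "p (Inl a) = Inl (p1 a)" for a using l[of a] by (auto simp: p1_def)
  have ip: "inj p" using p permutes_inj by blast
  have "inj p1" unfolding inj_def using ip pl by (metis injD sum.inject(1))
  hence sp1: "surj p1" by (simp add: finite_UNIV_inj_surj)
  have r: "p (Inr b) \<in> range Inr" for b
  proof (rule ccontr)
    assume "p (Inr b) \<notin> range Inr"
    then obtain c where c: "p (Inr b) = Inl c" by (cases "p (Inr b)") auto
    obtain a where "p1 a = c" using sp1 by (metis surj_def)
    then have "p (Inl a) = p (Inr b)" using c pl by simp
    then show False using ip by (meson injD sum.distinct(1))
  qed
  define p2 where "p2 b = projr (p (Inr b))" for b
  have pr: "p (Inr b) = Inr (p2 b)" for b using r[of b] by (auto simp: p2_def)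
  have "inj p2" unfolding inj_def using ip pr by (metis injD sum.inject(2))
  hence sp2: "surj p2" by (simp add: finite_UNIV_inj_surj)
  have "p1 permutes UNIV" using \<open>inj p1\<close> sp1 by (intro bij_imp_permutes) (auto simp: bij_def)
  moreover have "p2 permutes UNIV" using \<open>inj p2\<close> sp2 by (intro bij_imp_permutes) (auto simp: bij_def)
  moreover have "p = map_sum p1 p2" by (rule ext, case_tac x) (simp_all add: pl pr)
  ultimately show ?thesis by blast
qed

lemma map_sum_inj: "map_sum p q = map_sum p' q' \<Longrightarrow> p = p' \<and> q = q'"
proof
  assume e: "map_sum p q = map_sum p' q'"
  show "p = p'" proof fix x show "p x = p' x" using fun_cong[OF e, of "Inl x"] by simp qed
  show "q = q'" proof fix x show "q x = q' x" using fun_cong[OF e, of "Inr x"] by simp qed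
qed

lemma det_blk_lower:
  fixes P :: "real^'m::finite^'m" and T :: "real^'k::finite^'k"
  shows "det (blk P 0 R T) = det P * det T"
proof -
  let ?M = "blk P 0 R T"
  let ?f = "\<lambda>p. of_int (sign p) * (\<Prod>i\<in>UNIV. ?M$i$p i)"
  let ?PU = "{p. p permutes (UNIV::('m+'k) set)}"
  let ?S2 = "(\<lambda>(p,q). map_sum p q) ` ({p. p permutes (UNIV::'m set)} \<times> {q. q permutes (UNIV::'k set)})"
  have sub: "?S2 \<subseteq> ?PU" using map_sum_permutes by auto
  have z: "?f p = 0" if "p \<in> ?PU - ?S2" for p
  proof -
    have "\<exists>a. p (Inl a) \<notin> range Inl"
    proof (rule ccontr)
      assume "\<not> ?thesis"
      then have "\<And>a. p (Inl a) \<in> range Inl" by blast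
      moreover have "p permutes UNIV" using that by simp
      ultimately obtain p1 p2 where "p1 permutes UNIV" "p2 permutes UNIV" "p = map_sum p1 p2"
        using permutes_split[of p] by blast
      then have "p \<in> ?S2" by auto
      then show False using that by blast
    qed
    then obtain a c where "p (Inl a) = Inr c" by (metis range_eqI sum.exhaust)
    then have "?M $ Inl a $ p (Inl a) = 0" by simp
    then have "(\<Prod>i\<in>UNIV. ?M$i$p i) = 0" by (intro prod_zero) (auto intro!: bexI[of _ "Inl a"])
    then show ?thesis by simp
  qed
  have "det ?M = sum ?f ?S2"
  proof -
    have fin: "finite ?PU" by (rule finite_permutations) simp
    have "sum ?f ?PU = sum ?f ?S2" by (rule sum.mono_neutral_right[OF fin sub]) (use z in blast)
    then show ?thesis unfolding det_def .
  qed
  also have "\<dots> = (\<Sum>(p,q)\<in>{p. p permutes (UNIV::'m set)} \<times> {q. q permutes (UNIV::'k set)}. ?f (map_sum p q))"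
  proof (subst sum.reindex)
    show "inj_on (\<lambda>(p, q). map_sum p q) ({p. p permutes UNIV} \<times> {q. q permutes UNIV})"
      by (rule inj_onI) (auto dest: map_sum_inj)
  qed (simp only: o_def case_prod_unfold)
  also have "\<dots> = (\<Sum>(p,q)\<in>{p. p permutes (UNIV::'m set)} \<times> {q. q permutes (UNIV::'k set)}.
        (of_int (sign p) * (\<Prod>a\<in>UNIV. P$a$p a)) * (of_int (sign q) * (\<Prod>b\<in>UNIV. T$b$q b)))"
  proof (rule sum.cong[OF refl], clarify)
    fix p :: "'m \<Rightarrow> 'm" and q :: "'k \<Rightarrow> 'k" assume pq: "p permutes UNIV" "q permutes UNIV"
    have "(\<Prod>i\<in>UNIV. ?M$i$map_sum p q i) = (\<Prod>a\<in>UNIV. P$a$p a) * (\<Prod>b\<in>UNIV. T$b$q b)"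
      by (subst prod_UNIV_sum) simp
    then show "?f (map_sum p q) = (of_int (sign p) * (\<Prod>a\<in>UNIV. P$a$p a)) * (of_int (sign q) * (\<Prod>b\<in>UNIV. T$b$q b))"
      by (simp add: sign_map_sum[OF pq])
  qed
  also have "\<dots> = det P * det T"
    unfolding det_def sum_product sum.cartesian_product by (simp add: case_prod_unfold)
  finally show ?thesis .
qed



lemma inv_props:
  fixes M :: "real^'n::finite^'n"
  assumes "invertible M"
  shows "M ** matrix_inv M = mat 1" "matrix_inv M ** M = mat 1"
proof -
  have "\<exists>A'. M ** A' = mat 1 \<and> A' ** M = mat 1" using assms unfolding invertible_def by blast
  from someI_ex[OF this] show "M ** matrix_inv M = mat 1" "matrix_inv M ** M = mat 1"
    unfolding matrix_inv_def by blast+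
qed

lemma matrix_inv_eq:
  fixes M N :: "real^'n::finite^'n"
  assumes "M ** N = mat 1"
  shows "matrix_inv M = N"
proof -
  have i: "invertible M" using assms invertible_right_inverse by blast
  have "matrix_inv M = matrix_inv M ** (M ** N)" using assms by simp
  also have "\<dots> = N" by (simp add: matrix_mul_assoc inv_props(2)[OF i])
  finally show ?thesis .
qed

lemma inv_vec:
  fixes M :: "real^'n::finite^'n"
  assumes "invertible M" "M *v w = v"
  shows "matrix_inv M *v v = w"
  using assms by (metis inv_props(2) matrix_vector_mul_assoc matrix_vector_mul_lid)

lemma pos_def_invertible:
  fixes M :: "real^'n::finite^'n"
  assumes "pos_def M" shows "invertible M"
proof -
  have "\<forall>x. M *v x = 0 \<longrightarrow> x = 0"
  proof (intro allI impI)
    fix x assume "M *v x = 0"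
    then have "x \<bullet> (M *v x) = 0" by simp
    then show "x = 0" using assms unfolding pos_def_def by force
  qed
  then show ?thesis using invertible_left_inverse matrix_left_invertible_ker by blast
qed

lemma inner_transpose: "(x::real^'n::finite) \<bullet> (transpose M *v y) = (M *v x) \<bullet> y"
  using dot_lmul_matrix[of y M x] by (simp add: inner_commute)

lemma transpose_diff: "transpose (A - B) = transpose A - (transpose B :: real^'n::finite^'m::finite)"
  by (simp add: transpose_def vec_eq_iff)

lemma transpose_zero[simp]: "transpose (0::real^'n::finite^'m::finite) = 0"
  by (simp add: transpose_def vec_eq_iff)

lemma transpose_inv:
  fixes M :: "real^'n::finite^'n"
  assumes "invertible M" "transpose M = M"
  shows "transpose (matrix_inv M) = matrix_inv M"
proof -
  have "M ** transpose (matrix_inv M) = mat 1"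
    by (metis assms inv_props(2) matrix_transpose_mul transpose_mat)
  then have "matrix_inv M = transpose (matrix_inv M)" by (rule matrix_inv_eq)
  then show ?thesis by simp
qed

lemma det_scaleR: "det (c *\<^sub>R (M::real^'n::finite^'n)) = c ^ CARD('n) * det M"
proof -
  have "c *\<^sub>R M = (c *\<^sub>R mat 1) ** M" by (simp add: scalar_matrix_assoc[symmetric])
  moreover have "(c *\<^sub>R mat 1 :: real^'n^'n) = matrix ((*\<^sub>R) c)"
    by (simp add: matrix_def mat_def vec_eq_iff axis_def)
  ultimately show ?thesis by (simp add: det_mul)
qed

lemma pos_def_det_pos:
  fixes M :: "real^'n::finite^'n"
  assumes pd: "pos_def M" shows "det M > 0"
proof (rule ccontr)
  assume "\<not> det M > 0"
  define g where "g t = det ((1 - t) *\<^sub>R mat 1 + t *\<^sub>R M)" for t :: real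
  have cont: "continuous_on {0..1} g"
    unfolding g_def det_def by (intro continuous_intros)
  have "g 0 = 1" by (simp add: g_def)
  moreover have "g 1 \<le> 0" using \<open>\<not> det M > 0\<close> by (simp add: g_def)
  ultimately obtain t where t: "t \<in> {0..1}" "g t = 0"
    using IVT2'[of g 1 0 0] cont by force
  have "pos_def ((1 - t) *\<^sub>R mat 1 + t *\<^sub>R M)"
    unfolding pos_def_def
  proof (intro conjI allI impI)
    show "transpose ((1 - t) *\<^sub>R mat 1 + t *\<^sub>R M) = (1 - t) *\<^sub>R mat 1 + t *\<^sub>R M"
      using pd unfolding pos_def_def by (simp add: transpose_def vec_eq_iff mat_def)
    fix v :: "real^'n" assume v: "v \<noteq> 0"
    have e: "v \<bullet> (((1 - t) *\<^sub>R mat 1 + t *\<^sub>R M) *v v) = (1 - t) * (v \<bullet> v) + t * (v \<bullet> (M *v v))"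
      by (simp add: matrix_vector_mult_add_rdistrib scaleR_matrix_vector_assoc[symmetric] inner_add_right)
    have "0 < v \<bullet> v" using v by simp
    moreover have "0 < v \<bullet> (M *v v)" using pd v unfolding pos_def_def by blast
    ultimately show "0 < v \<bullet> (((1 - t) *\<^sub>R mat 1 + t *\<^sub>R M) *v v)"
    proof (cases "t = 0")
      case True then show ?thesis unfolding e using \<open>0 < v \<bullet> v\<close> by simp
    next
      case False
      have "0 \<le> (1 - t) * (v \<bullet> v)" using t by simp
      moreover have "0 < t * (v \<bullet> (M *v v))" using False t \<open>0 < v \<bullet> (M *v v)\<close> by simp
      ultimately show ?thesis unfolding e by linarith
    qed
  qed
  then have "det ((1 - t) *\<^sub>R mat 1 + t *\<^sub>R M) \<noteq> 0"
    using pos_def_invertible invertible_det_nz by blast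
  then show False using t by (simp add: g_def)
qed

lemma card_sum_type: "CARD('a::finite + 'b::finite) = CARD('a) + CARD('b)"
  by (subst UNIV_Plus_UNIV[symmetric], subst card_Plus) simp_all



lemma final_arith:
  fixes K a q D E :: real and m :: nat
  assumes a: "a > 0" and q: "q \<ge> 0" and D: "D > 0" and E: "E > 0" and K: "K \<ge> 0"
  shows "(pi powr (-((real m + K) - 1)/2) * (D*E) powr (-1/2) * (a+q) powr (-((real m + K)+1)/2) * Gamma(((real m + K)+1)/2))
       / (pi powr (-(K-1)/2) * E powr (-1/2) * a powr (-(K+1)/2) * Gamma((K+1)/2))
     = pi powr (-real m/2) * (K+1) powr (-real m/2) * ((a/(K+1)) ^ m * D) powr (-1/2)
       * (1 + (((K+1)/a) * q)/(K+1)) powr (-(real m + (K+1))/2) * Gamma((real m + (K+1))/2) / Gamma((K+1)/2)"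
  (is "?L = ?R")
proof -
  have g1: "Gamma(((real m + K)+1)/2) > 0" using K by (intro Gamma_real_pos) simp
  have g2: "Gamma((K+1)/2) > 0" using K by (intro Gamma_real_pos) simp
  have aq: "a + q > 0" using a q by simp
  have K1: "K + 1 > 0" using K by simp
  have c: "a/(K+1) > 0" using a K1 by simp
  have e0: "(((K+1)/a) * q)/(K+1) = q/a" using K1 a by simp
  have e1: "1 + (((K+1)/a) * q)/(K+1) = (a+q)/a" unfolding e0 using a by (simp add: field_simps)
  have pos1: "(a/(K+1)) ^ m * D > 0" using c D by simp
  have Lp: "?L > 0" using g1 g2 aq a D E by simp
  have Rp: "?R > 0" using g1 g2 aq a D E K1 pos1 unfolding e1 by simp
  have "ln ?L = ln ?R"
    unfolding e1 using g1 g2 aq a D E K1 c pos1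
    by (simp add: ln_mult ln_div ln_powr ln_realpow field_simps)
  then show ?thesis using Lp Rp by simp
qed



lemma mv_neg: "(M::real^'n::finite^'m::finite) *v (- y) = - (M *v y)"
  by (simp add: vec_eq_iff matrix_vector_mult_def sum_negf)

lemma mm_zero_l[simp]: "(0::real^'n::finite^'m::finite) ** (M::real^'p::finite^'n) = 0"
  by (simp add: vec_eq_iff matrix_matrix_mult_def)
lemma mm_zero_r[simp]: "(M::real^'n::finite^'m::finite) ** (0::real^'p::finite^'n) = 0"
  by (simp add: vec_eq_iff matrix_matrix_mult_def)

theorem mainTheorem4:
  fixes \<rho> :: "real^'d \<Rightarrow> real^'d \<Rightarrow> real"
    and s :: "'m::finite \<Rightarrow> real^'d"
    and x :: "'k::finite \<Rightarrow> real^'d"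
    and u :: "real^'m" and z :: "real^'k"
  assumes "correlation_function \<rho>"
    and "pos_def (cov_mat \<rho> (concat_pts s x))"
    and "z \<noteq> 0"
  shows "cond_intensity \<rho> s x z u =
    student_density (real CARD('k) + 1)
      (cross_cov \<rho> s x *v (matrix_inv (cov_mat \<rho> x) *v z))
      (((z \<bullet> (matrix_inv (cov_mat \<rho> x) *v z)) / (real CARD('k) + 1)) *\<^sub>R
        (cov_mat \<rho> s - cross_cov \<rho> s x ** matrix_inv (cov_mat \<rho> x) ** transpose (cross_cov \<rho> s x)))
      u"
proof -
  define A where "A = cov_mat \<rho> s"
  define B where "B = cross_cov \<rho> s x"
  define C where "C = cov_mat \<rho> x"
  define Sg where "Sg = cov_mat \<rho> (concat_pts s x)"
  have sym: "\<And>p q. \<rho> p q = \<rho> q p" using assms(1) unfolding correlation_function_def by blast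
  have Sg_blk: "Sg = blk A B (transpose B) C"
    unfolding vec_eq_iff
  proof (intro allI)
    fix i j :: "'m + 'k"
    show "Sg $ i $ j = blk A B (transpose B) C $ i $ j"
      by (cases i; cases j) (simp_all add: Sg_def A_def B_def C_def cov_mat_def cross_cov_def concat_pts_def transpose_def sym)
  qed
  have pdSg: "pos_def Sg" using assms(2) Sg_def by simp
  have CT: "transpose C = C" by (simp add: C_def cov_mat_def transpose_def vec_eq_iff sym)
  have AT: "transpose A = A" by (simp add: A_def cov_mat_def transpose_def vec_eq_iff sym)
  have pdC: "pos_def C" unfolding pos_def_def
  proof (intro conjI allI impI CT)
    fix v :: "real^'k" assume v: "v \<noteq> 0"
    then have "concat_vec (0::real^'m) v \<noteq> 0" by (simp add: concat_eq0)
    then have "0 < concat_vec (0::real^'m) v \<bullet> (Sg *v concat_vec 0 v)" using pdSg unfolding pos_def_def by blast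
    then show "0 < v \<bullet> (C *v v)" unfolding Sg_blk blk_mult_vec inner_concat by simp
  qed
  have iC: "invertible C" by (rule pos_def_invertible[OF pdC])
  define Ci where "Ci = matrix_inv C"
  have CCi: "C ** Ci = mat 1" and CiC: "Ci ** C = mat 1" using inv_props[OF iC] Ci_def by auto
  have CiT: "transpose Ci = Ci" unfolding Ci_def by (rule transpose_inv[OF iC CT])
  define S where "S = A - B ** Ci ** transpose B"
  have ST: "transpose S = S"
    by (simp add: S_def transpose_diff matrix_transpose_mul AT CiT matrix_mul_assoc)
  have pdS: "pos_def S" unfolding pos_def_def
  proof (intro conjI allI impI ST)
    fix v :: "real^'m" assume v: "v \<noteq> 0"
    define w where "w = - (Ci *v (transpose B *v v))"
    have e1: "A *v v + B *v w = S *v v"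
      by (simp add: w_def S_def mv_neg matrix_vector_mult_diff_rdistrib matrix_vector_mul_assoc matrix_mul_assoc del: transpose_matrix_vector)
    have e2: "transpose B *v v + C *v w = 0"
      by (simp add: w_def mv_neg matrix_vector_mul_assoc matrix_mul_assoc CCi del: transpose_matrix_vector)
    have "concat_vec v w \<noteq> 0" using v by (simp add: concat_eq0)
    then have "0 < concat_vec v w \<bullet> (Sg *v concat_vec v w)" using pdSg unfolding pos_def_def by blast
    then show "0 < v \<bullet> (S *v v)" unfolding Sg_blk blk_mult_vec e1 e2 inner_concat by simp
  qed
  have iS: "invertible S" by (rule pos_def_invertible[OF pdS])
  define Si where "Si = matrix_inv S"
  have SSi: "S ** Si = mat 1" and SiS: "Si ** S = mat 1" using inv_props[OF iS] Si_def by auto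
  have iSg: "invertible Sg" by (rule pos_def_invertible[OF pdSg])
  have BCiC: "B ** Ci ** C = B" by (metis matrix_mul_assoc CiC matrix_mul_rid)
  have fac: "Sg = blk (mat 1) (B ** Ci) 0 (mat 1) ** blk S 0 (transpose B) C"
    unfolding Sg_blk blk_mult by (simp add: S_def BCiC mm_zero_l mm_zero_r)
  have d1: "det (blk (mat 1) (B ** Ci) (0::real^'m^'k) (mat 1)) = 1"
    by (subst det_transpose[symmetric]) (simp add: blk_transpose det_blk_lower)
  have dSg: "det Sg = det S * det C" by (simp add: fac det_mul d1 det_blk_lower)
  have DS: "det S > 0" by (rule pos_def_det_pos[OF pdS])
  have DC: "det C > 0" by (rule pos_def_det_pos[OF pdC])
  define a where "a = z \<bullet> (Ci *v z)"
  define mu where "mu = B *v (Ci *v z)"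
  define d where "d = u - mu"
  define w1 where "w1 = Si *v d"
  define w2 where "w2 = Ci *v (z - transpose B *v w1)"
  have Sw1: "S *v w1 = d" by (simp add: w1_def matrix_vector_mul_assoc SSi)
  have Aeq: "A = S + B ** Ci ** transpose B" by (simp add: S_def)
  have f1: "A *v w1 + B *v w2 = u"
  proof -
    have "A *v w1 + B *v w2 = S *v w1 + (B ** Ci ** transpose B) *v w1 + (mu - (B ** Ci ** transpose B) *v w1)"
      unfolding Aeq w2_def mu_def
      by (simp add: matrix_vector_mult_add_rdistrib matrix_vector_mult_diff_distrib matrix_vector_mul_assoc matrix_mul_assoc del: transpose_matrix_vector)
    then show ?thesis by (simp add: Sw1 d_def)
  qed
  have f2: "transpose B *v w1 + C *v w2 = z"
    unfolding w2_def by (simp add: matrix_vector_mul_assoc CCi del: transpose_matrix_vector)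
  have inv: "matrix_inv Sg *v concat_vec u z = concat_vec w1 w2"
    by (rule inv_vec[OF iSg]) (simp add: Sg_blk blk_mult_vec f1 f2 del: transpose_matrix_vector)
  have zw2: "z \<bullet> w2 = a - mu \<bullet> w1"
  proof -
    have "z \<bullet> w2 = z \<bullet> (Ci *v z) - z \<bullet> (Ci *v (transpose B *v w1))"
      unfolding w2_def by (simp add: matrix_vector_mult_diff_distrib inner_diff_right del: transpose_matrix_vector)
    also have "z \<bullet> (Ci *v (transpose B *v w1)) = (Ci *v z) \<bullet> (transpose B *v w1)"
      using inner_transpose[of z Ci "transpose B *v w1"] CiT by simp
    also have "\<dots> = mu \<bullet> w1"
      using inner_transpose[of "Ci *v z" B w1] by (simp add: mu_def del: transpose_matrix_vector)
    finally show ?thesis by (simp add: a_def)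
  qed
  have Q: "concat_vec u z \<bullet> (matrix_inv Sg *v concat_vec u z) = a + d \<bullet> (Si *v d)"
    unfolding inv inner_concat zw2 by (simp add: d_def w1_def inner_diff_left)
  have apos: "a > 0"
  proof -
    define y where "y = Ci *v z"
    have Cy: "C *v y = z" by (simp add: y_def matrix_vector_mul_assoc CCi)
    have "y \<noteq> 0" using Cy assms(3) by auto
    then have "0 < y \<bullet> (C *v y)" using pdC unfolding pos_def_def by blast
    then show ?thesis unfolding a_def y_def[symmetric] using Cy by (simp add: inner_commute)
  qed
  have qnn: "d \<bullet> (Si *v d) \<ge> 0"
  proof (cases "w1 = 0")
    case True then show ?thesis by (simp add: w1_def[symmetric])
  next
    case False
    then have "0 < w1 \<bullet> (S *v w1)" using pdS unfolding pos_def_def by blast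
    then show ?thesis unfolding w1_def[symmetric] using Sw1 by (simp add: inner_commute)
  qed
  define K where "K = real CARD('k)"
  define Sc where "Sc = (a / (K + 1)) *\<^sub>R S"
  have Kp: "K + 1 > 0" by (simp add: K_def)
  have iSc: "matrix_inv Sc = ((K+1)/a) *\<^sub>R Si"
  proof (rule matrix_inv_eq)
    have "Sc ** (((K+1)/a) *\<^sub>R Si) = (((K+1)/a) * (a/(K+1))) *\<^sub>R (S ** Si)"
      unfolding Sc_def by (simp add: matrix_scalar_ac scalar_matrix_assoc[symmetric])
    also have "\<dots> = mat 1" using apos Kp by (simp add: SSi)
    finally show "Sc ** (((K+1)/a) *\<^sub>R Si) = mat 1" .
  qed
  have dSc: "det Sc = (a/(K+1)) ^ CARD('m) * det S" unfolding Sc_def by (rule det_scaleR)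
  have qSc: "(u - mu) \<bullet> (matrix_inv Sc *v (u - mu)) = ((K+1)/a) * (d \<bullet> (Si *v d))"
    unfolding iSc d_def by (simp add: scaleR_matrix_vector_assoc[symmetric])
  have L: "lambda_dens \<rho> (concat_pts s x) (concat_vec u z) =
     pi powr (-((real CARD('m) + K) - 1)/2) * (det S * det C) powr (-1/2) * (a + d \<bullet> (Si *v d)) powr (-((real CARD('m) + K)+1)/2) * Gamma(((real CARD('m) + K)+1)/2)"
    unfolding lambda_dens_def Let_def Sg_def[symmetric] Q dSg by (simp add: card_sum_type K_def)
  have Lx: "lambda_dens \<rho> x z = pi powr (-(K-1)/2) * det C powr (-1/2) * a powr (-(K+1)/2) * Gamma((K+1)/2)"
    unfolding lambda_dens_def Let_def C_def[symmetric] Ci_def[symmetric] a_def[symmetric] K_def ..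
  have R: "student_density (K+1) mu Sc u = pi powr (-real CARD('m)/2) * (K+1) powr (-real CARD('m)/2) * ((a/(K+1)) ^ CARD('m) * det S) powr (-1/2)
       * (1 + (((K+1)/a) * (d \<bullet> (Si *v d)))/(K+1)) powr (-(real CARD('m) + (K+1))/2) * Gamma((real CARD('m) + (K+1))/2) / Gamma((K+1)/2)"
    unfolding student_density_def Let_def dSc qSc ..
  have "cond_intensity \<rho> s x z u = student_density (K+1) mu Sc u"
    unfolding cond_intensity_def L Lx R
    by (rule final_arith[OF apos qnn DS DC]) (simp add: K_def)
  then show ?thesis unfolding Sc_def a_def mu_def S_def Ci_def A_def B_def C_def K_def .
qed

end
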